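(* Let $G$ be an $N$-cube Adinkra with heights disregarded. Then $G$ is minimally vertex-transitive up to the bipartition: the only automorphism of $G$ fixing a vertex is the identity permutation, and $|\mathrm{Aut}(G)|=\tfrac12|V|=2^{N-1}$.
   Context: An Adinkra of dimension $N$ is a finite connected simple graph $G=(V,E)$ together with: (1) a bipartition of $V$ into bosons and fermions such that every edge joins a boson and a fermion; (2) a height function (here disregarded); (3) a coloring of $E$ by colors $\{1,\dots,N\}$ such that each vertex is incident to exactly one edge of each color; (4) an edge parity $\pi:E\to\mathbb{Z}_2$ (parity $1$ = dashed). These must satisfy: every path with edge colors $(i,j)$, $i\neq j$, lies in a unique 4-cycle with colors $(i,j,i,j)$, and every such two-colored 4-cycle has an odd number of dashed edges. An $N$-cube Adinkra has $2^N$ vertices. Switching a vertex reverses the parity of all edges incident to it. An automorphism of $G$ is a permutation of $V$ preserving adjacency, edge colors and the bipartition, which becomes parity-preserving after switching some set of vertices; automorphisms are identified when they induce the same permutation of $V$, and $\mathrm{Aut}(G)$ is the group of these permutations. *)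

theory Defs
  imports Main
begin

text \<open>Edges are two-element vertex sets; colors are naturals in 1..N;
  the parity of an edge is a boolean (True = dashed); boson v says v is a boson,
  fermions are the vertices of V with boson v = False.\<close>

definition adinkra ::
  "nat \<Rightarrow> 'v set \<Rightarrow> 'v set set \<Rightarrow> ('v \<Rightarrow> bool) \<Rightarrow> ('v set \<Rightarrow> nat) \<Rightarrow> ('v set \<Rightarrow> bool) \<Rightarrow> bool"
where
  "adinkra N V E boson col par \<longleftrightarrow>
     finite V \<and> V \<noteq> {} \<and>
     \<comment> \<open>simple graph\<close>
     (\<forall>e\<in>E. \<exists>u v. u \<in> V \<and> v \<in> V \<and> u \<noteq> v \<and> e = {u, v}) \<and>
     \<comment> \<open>connected\<close>
     (\<forall>u\<in>V. \<forall>v\<in>V. (u, v) \<in> {(x, y). {x, y} \<in> E}\<^sup>*) \<and>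
     \<comment> \<open>bipartition: every edge joins a boson and a fermion\<close>
     (\<forall>e\<in>E. \<exists>u v. e = {u, v} \<and> boson u \<and> \<not> boson v) \<and>
     \<comment> \<open>coloring\<close>
     (\<forall>e\<in>E. col e \<in> {1..N}) \<and>
     (\<forall>v\<in>V. \<forall>i\<in>{1..N}. \<exists>!e. e \<in> E \<and> v \<in> e \<and> col e = i) \<and>
     \<comment> \<open>every (i,j)-path lies in a unique (i,j,i,j)-colored 4-cycle\<close>
     (\<forall>v0 v1 v2 i j. i \<noteq> j \<and> {v0, v1} \<in> E \<and> col {v0, v1} = i \<and>
          {v1, v2} \<in> E \<and> col {v1, v2} = j \<longrightarrow>
        (\<exists>!v3. {v2, v3} \<in> E \<and> col {v2, v3} = i \<and> {v3, v0} \<in> E \<and> col {v3, v0} = j)) \<and>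
     \<comment> \<open>every two-colored 4-cycle has an odd number of dashed edges\<close>
     (\<forall>v0 v1 v2 v3 i j. i \<noteq> j \<and>
          {v0, v1} \<in> E \<and> col {v0, v1} = i \<and> {v1, v2} \<in> E \<and> col {v1, v2} = j \<and>
          {v2, v3} \<in> E \<and> col {v2, v3} = i \<and> {v3, v0} \<in> E \<and> col {v3, v0} = j \<longrightarrow>
        odd (of_bool (par {v0, v1}) + of_bool (par {v1, v2}) + of_bool (par {v2, v3})
             + of_bool (par {v3, v0}) :: nat))"

definition switch :: "'v set \<Rightarrow> ('v set \<Rightarrow> bool) \<Rightarrow> 'v set \<Rightarrow> bool" where
  "switch S par e = (par e \<noteq> odd (card (e \<inter> S)))"

definition adinkra_automorphism ::
  "'v set \<Rightarrow> 'v set set \<Rightarrow> ('v \<Rightarrow> bool) \<Rightarrow> ('v set \<Rightarrow> nat) \<Rightarrow> ('v set \<Rightarrow> bool) \<Rightarrow> ('v \<Rightarrow> 'v) \<Rightarrow> bool"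
where
  "adinkra_automorphism V E boson col par f \<longleftrightarrow>
     bij_betw f V V \<and>
     (\<forall>u\<in>V. \<forall>v\<in>V. {u, v} \<in> E \<longleftrightarrow> {f u, f v} \<in> E) \<and>
     (\<forall>e\<in>E. col (f ` e) = col e) \<and>
     (\<forall>v\<in>V. boson (f v) = boson v) \<and>
     (\<exists>S\<subseteq>V. \<forall>e\<in>E. par (f ` e) = switch S par e)"

text \<open>Aut(G): automorphisms identified with the permutations of V they induce
  (represented by functions that are the identity outside V).\<close>
definition Aut ::
  "'v set \<Rightarrow> 'v set set \<Rightarrow> ('v \<Rightarrow> bool) \<Rightarrow> ('v set \<Rightarrow> nat) \<Rightarrow> ('v set \<Rightarrow> bool) \<Rightarrow> ('v \<Rightarrow> 'v) set"
where
  "Aut V E boson col par =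
     {f. adinkra_automorphism V E boson col par f \<and> (\<forall>x. x \<notin> V \<longrightarrow> f x = x)}"

end

theory Submission imports Defs begin

locale adk =
  fixes N :: nat and V :: "'v set" and E :: "'v set set" and boson :: "'v \<Rightarrow> bool"
    and col :: "'v set \<Rightarrow> nat" and par :: "'v set \<Rightarrow> bool"
  assumes A: "adinkra N V E boson col par"
begin

lemmas D = A[unfolded adinkra_def]

lemma finV: "finite V"
  using D by (rule conjunct1)

lemma edge0: "\<forall>e\<in>E. \<exists>u v. u \<in> V \<and> v \<in> V \<and> u \<noteq> v \<and> e = {u, v}"
  using D[THEN conjunct2, THEN conjunct2] by (rule conjunct1)

lemma edge: "e \<in> E \<Longrightarrow> \<exists>u v. u \<in> V \<and> v \<in> V \<and> u \<noteq> v \<and> e = {u, v}"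
  using edge0 by blast

lemma conn0: "\<forall>u\<in>V. \<forall>v\<in>V. (u, v) \<in> {(x, y). {x, y} \<in> E}\<^sup>*"
  using D[THEN conjunct2, THEN conjunct2, THEN conjunct2] by (rule conjunct1)

lemma conn: "u \<in> V \<Longrightarrow> v \<in> V \<Longrightarrow> (u, v) \<in> {(x, y). {x, y} \<in> E}\<^sup>*"
  using conn0 by blast

lemma bip0: "\<forall>e\<in>E. \<exists>u v. e = {u, v} \<and> boson u \<and> \<not> boson v"
  using D[THEN conjunct2, THEN conjunct2, THEN conjunct2, THEN conjunct2] by (rule conjunct1)

lemma bip: "e \<in> E \<Longrightarrow> \<exists>u v. e = {u, v} \<and> boson u \<and> \<not> boson v"
  using bip0 by blast

lemma colr0: "\<forall>e\<in>E. col e \<in> {1..N}"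
  using D[THEN conjunct2, THEN conjunct2, THEN conjunct2, THEN conjunct2, THEN conjunct2] by (rule conjunct1)

lemma colr: "e \<in> E \<Longrightarrow> col e \<in> {1..N}"
  using colr0 by blast

lemma uniq0: "\<forall>v\<in>V. \<forall>i\<in>{1..N}. \<exists>!e. e \<in> E \<and> v \<in> e \<and> col e = i"
  using D[THEN conjunct2, THEN conjunct2, THEN conjunct2, THEN conjunct2, THEN conjunct2, THEN conjunct2] by (rule conjunct1)

lemma uniq: "v \<in> V \<Longrightarrow> i \<in> {1..N} \<Longrightarrow> \<exists>!e. e \<in> E \<and> v \<in> e \<and> col e = i"
  using uniq0 by blast

lemma path0: "\<forall>v0 v1 v2 i j. i \<noteq> j \<and> {v0, v1} \<in> E \<and> col {v0, v1} = i \<and>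
          {v1, v2} \<in> E \<and> col {v1, v2} = j \<longrightarrow>
        (\<exists>!v3. {v2, v3} \<in> E \<and> col {v2, v3} = i \<and> {v3, v0} \<in> E \<and> col {v3, v0} = j)"
  using D[THEN conjunct2, THEN conjunct2, THEN conjunct2, THEN conjunct2, THEN conjunct2, THEN conjunct2, THEN conjunct2] by (rule conjunct1)

lemma path: "i \<noteq> j \<Longrightarrow> {v0, v1} \<in> E \<Longrightarrow> col {v0, v1} = i \<Longrightarrow>
          {v1, v2} \<in> E \<Longrightarrow> col {v1, v2} = j \<Longrightarrow>
        (\<exists>!v3. {v2, v3} \<in> E \<and> col {v2, v3} = i \<and> {v3, v0} \<in> E \<and> col {v3, v0} = j)"
  using path0 by blast

definition oddd :: "('v set \<Rightarrow> bool) \<Rightarrow> bool" where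
  "oddd Q \<longleftrightarrow> (\<forall>v0 v1 v2 v3 i j. i \<noteq> j \<and>
          {v0, v1} \<in> E \<and> col {v0, v1} = i \<and> {v1, v2} \<in> E \<and> col {v1, v2} = j \<and>
          {v2, v3} \<in> E \<and> col {v2, v3} = i \<and> {v3, v0} \<in> E \<and> col {v3, v0} = j \<longrightarrow>
        odd (of_bool (Q {v0, v1}) + of_bool (Q {v1, v2}) + of_bool (Q {v2, v3})
             + of_bool (Q {v3, v0}) :: nat))"

lemma edge_ne: "{y, z} \<in> E \<Longrightarrow> y \<noteq> z \<and> y \<in> V \<and> z \<in> V"
  using edge[of "{y,z}"] by (auto simp: doubleton_eq_iff)

lemma pair_uniq: "{y, z} \<in> E \<Longrightarrow> {y, z'} \<in> E \<Longrightarrow> col {y, z} = col {y, z'} \<Longrightarrow> z = z'"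
proof -
  assume a: "{y, z} \<in> E" "{y, z'} \<in> E" "col {y, z} = col {y, z'}"
  have "y \<in> V" "y \<noteq> z" using edge_ne[OF a(1)] by auto
  moreover have "col {y,z} \<in> {1..N}" using colr a(1) by blast
  ultimately have "\<exists>!e. e \<in> E \<and> y \<in> e \<and> col e = col {y,z}" using uniq by blast
  then obtain e0 where e0: "\<And>e. e \<in> E \<and> y \<in> e \<and> col e = col {y,z} \<Longrightarrow> e = e0"
    unfolding Ex1_def by blast
  have "{y,z} = e0" by (rule e0) (use a in simp)
  moreover have "{y,z'} = e0" by (rule e0) (use a in simp)
  ultimately have "{y,z} = {y,z'}" by simp
  thus "z = z'" using \<open>y \<noteq> z\<close> by (auto simp: doubleton_eq_iff)
qed

definition sg :: "nat \<Rightarrow> 'v \<Rightarrow> 'v" where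
  "sg i y = (THE z. {y, z} \<in> E \<and> col {y, z} = i)"

lemma sg_ex: assumes "y \<in> V" "i \<in> {1..N}"
  shows "{y, sg i y} \<in> E \<and> col {y, sg i y} = i"
proof -
  obtain e where e: "e \<in> E" "y \<in> e" "col e = i" using uniq[OF assms] by blast
  obtain u v where uv: "e = {u,v}" using edge[OF e(1)] by blast
  obtain z where z: "e = {y, z}" using uv e(2) by auto
  have "\<exists>!z. {y, z} \<in> E \<and> col {y, z} = i"
    using z e pair_uniq by blast
  thus ?thesis unfolding sg_def by (rule theI')
qed

lemma sg_uniq: "{y, z} \<in> E \<Longrightarrow> col {y, z} = i \<Longrightarrow> z = sg i y"
  using sg_ex[of y i] edge_ne colr pair_uniq by metis

lemma sg_V: "y \<in> V \<Longrightarrow> i \<in> {1..N} \<Longrightarrow> sg i y \<in> V"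
  using sg_ex edge_ne by blast

lemma sg_sg: "y \<in> V \<Longrightarrow> i \<in> {1..N} \<Longrightarrow> sg i (sg i y) = y"
  using sg_ex[of y i] sg_uniq[of "sg i y" y i] by (simp add: insert_commute)

lemma sg_boson: "y \<in> V \<Longrightarrow> i \<in> {1..N} \<Longrightarrow> boson (sg i y) = (\<not> boson y)"
  using sg_ex[of y i] bip[of "{y, sg i y}"] by (auto simp: doubleton_eq_iff)

lemma sg_comm: assumes "y \<in> V" "i \<in> {1..N}" "j \<in> {1..N}"
  shows "sg i (sg j y) = sg j (sg i y)"
proof (cases "i = j")
  case False
  have 1: "{sg i y, y} \<in> E" "col {sg i y, y} = i" using sg_ex[OF assms(1,2)] by (auto simp: insert_commute)
  have 2: "{y, sg j y} \<in> E" "col {y, sg j y} = j" using sg_ex[OF assms(1,3)] by auto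
  obtain v3 where v3: "{sg j y, v3} \<in> E" "col {sg j y, v3} = i" "{v3, sg i y} \<in> E" "col {v3, sg i y} = j"
    using path[OF False 1 2] by blast
  have "v3 = sg i (sg j y)" using sg_uniq v3 by blast
  moreover have "v3 = sg j (sg i y)" using sg_uniq v3 by (metis insert_commute)
  ultimately show ?thesis by simp
qed simp

lemma edge_sg: "e \<in> E \<Longrightarrow> \<exists>y\<in>V. e = {y, sg (col e) y} \<and> col e \<in> {1..N}"
  using edge colr sg_uniq by metis


fun actk :: "nat set \<Rightarrow> nat \<Rightarrow> 'v \<Rightarrow> 'v" where
  "actk U 0 y = y"
| "actk U (Suc k) y = (if Suc k \<in> U then sg (Suc k) (actk U k y) else actk U k y)"

lemma actk_V: "k \<le> N \<Longrightarrow> y \<in> V \<Longrightarrow> actk U k y \<in> V"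
  by (induction k) (auto intro: sg_V)

lemma actk_sg: "k \<le> N \<Longrightarrow> y \<in> V \<Longrightarrow> i \<in> {1..N} \<Longrightarrow> sg i (actk U k y) = actk U k (sg i y)"
proof (induction k)
  case (Suc k)
  then show ?case using sg_comm[of "actk U k y" i "Suc k"] actk_V[of k y U] by auto
qed simp

lemma actk_inv: "k \<le> N \<Longrightarrow> y \<in> V \<Longrightarrow> actk U k (actk U k y) = y"
proof (induction k)
  case (Suc k)
  have v: "actk U k y \<in> V" using Suc actk_V by auto
  show ?case
  proof (cases "Suc k \<in> U")
    case True
    have "actk U (Suc k) (actk U (Suc k) y) = sg (Suc k) (actk U k (sg (Suc k) (actk U k y)))"
      using True by simp
    also have "\<dots> = sg (Suc k) (sg (Suc k) (actk U k (actk U k y)))"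
      using actk_sg[of k "actk U k y" "Suc k" U] Suc v by simp
    also have "\<dots> = y" using Suc sg_sg by simp
    finally show ?thesis .
  qed (use Suc in simp)
qed simp

lemma actk_cong: "(\<forall>j\<in>{1..k}. j \<in> U \<longleftrightarrow> j \<in> U') \<Longrightarrow> actk U k y = actk U' k y"
  by (induction k) auto

lemma actk_flip: "k \<le> N \<Longrightarrow> y \<in> V \<Longrightarrow> i \<in> {1..k} \<Longrightarrow>
   sg i (actk U k y) = actk (U - {i} \<union> ({i} - U)) k y"
proof (induction k)
  case (Suc k)
  have v: "actk U k y \<in> V" using Suc actk_V by auto
  show ?case
  proof (cases "i = Suc k")
    case True
    have c: "actk U k y = actk (U - {i} \<union> ({i} - U)) k y"
      by (rule actk_cong) (use True in auto)
    show ?thesis using True c sg_sg[OF v, of "Suc k"] Suc.prems by auto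
  next
    case False
    hence i: "i \<in> {1..k}" using Suc.prems by auto
    have ih: "sg i (actk U k y) = actk (U - {i} \<union> ({i} - U)) k y" using Suc i by auto
    show ?thesis
    proof (cases "Suc k \<in> U")
      case True
      then show ?thesis using False ih sg_comm[OF v, of i "Suc k"] Suc.prems i by auto
    next
      case F2: False
      then show ?thesis using False ih by auto
    qed
  qed
qed simp

lemma actk_boson: "k \<le> N \<Longrightarrow> y \<in> V \<Longrightarrow> boson (actk U k y) = (boson y \<noteq> odd (card (U \<inter> {1..k})))"
proof (induction k)
  case (Suc k)
  have v: "actk U k y \<in> V" using Suc actk_V by auto
  have e: "{1..Suc k} = insert (Suc k) {1..k}" by auto
  show ?case
  proof (cases "Suc k \<in> U")
    case True
    hence "U \<inter> {1..Suc k} = insert (Suc k) (U \<inter> {1..k})" using e by auto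
    hence "card (U \<inter> {1..Suc k}) = Suc (card (U \<inter> {1..k}))" by simp
    then show ?thesis using True Suc sg_boson[OF v, of "Suc k"] by auto
  next
    case False
    hence "U \<inter> {1..Suc k} = U \<inter> {1..k}" using e by auto
    then show ?thesis using False Suc by auto
  qed
qed simp

definition act :: "nat set \<Rightarrow> 'v \<Rightarrow> 'v" where "act U y = actk U N y"

lemma act_surj: assumes "b \<in> V" "z \<in> V" shows "\<exists>T\<subseteq>{1..N}. z = act T b"
proof -
  have "(b, z) \<in> {(x, y). {x, y} \<in> E}\<^sup>*" using conn assms by blast
  then show ?thesis
  proof (induction rule: rtrancl_induct)
    case base
    have "actk {} k b = b" for k by (induction k) auto
    hence "b = act {} b" unfolding act_def by simp
    then show ?case by (intro exI[of _ "{}"]) simp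
  next
    case (step y z)
    then obtain T where T: "T \<subseteq> {1..N}" "y = act T b" by blast
    have yz: "{y,z} \<in> E" using step by simp
    have yV: "y \<in> V" using edge_ne yz by blast
    have c: "col {y,z} \<in> {1..N}" using colr yz by blast
    define cc where "cc = col {y,z}"
    have cc: "cc \<in> {1..N}" using c cc_def by simp
    have "z = sg cc y" using sg_uniq yz cc_def by blast
    also have "\<dots> = sg cc (act T b)" using T(2) by simp
    also have "\<dots> = act (T - {cc} \<union> ({cc} - T)) b"
      unfolding act_def using actk_flip[of N b cc T] assms cc by simp
    finally have zz: "z = act (T - {cc} \<union> ({cc} - T)) b" .
    have ss: "T - {cc} \<union> ({cc} - T) \<subseteq> {1..N}" using T(1) cc by auto
    show ?case by (rule exI[where x="T - {cc} \<union> ({cc} - T)"]) (use zz ss in simp)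
  qed
qed


lemma cardV_inj: assumes "card V = 2 ^ N" "b \<in> V"
  shows "inj_on (\<lambda>T. act T b) (Pow {1..N})"
proof -
  have img: "(\<lambda>T. act T b) ` Pow {1..N} = V"
    using act_surj[OF assms(2)] actk_V[of N b] assms(2) unfolding act_def by fastforce
  have "card (Pow {1..N}) = 2 ^ N" by (simp add: card_Pow)
  thus ?thesis using img assms(1) by (intro eq_card_imp_inj_on) auto
qed

lemma switch_pair: "u \<noteq> v \<Longrightarrow> switch S Q {u, v} = (Q {u, v} \<noteq> ((u \<in> S) \<noteq> (v \<in> S)))"
  unfolding switch_def by (cases "u \<in> S"; cases "v \<in> S") (auto simp: Int_insert_left)

lemma odd4: "odd (of_bool a + of_bool b + of_bool c + of_bool d :: nat) \<longleftrightarrow> (a \<noteq> (b \<noteq> (c \<noteq> d)))"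
  by (cases a; cases b; cases c; cases d) auto

lemma sg_edge: assumes "{a, b} \<in> E" "i \<in> {1..N}"
  shows "{sg i a, sg i b} \<in> E \<and> col {sg i a, sg i b} = col {a, b}"
proof -
  have a: "a \<in> V" and c: "col {a,b} \<in> {1..N}" using assms edge_ne colr by blast+
  have b: "b = sg (col {a,b}) a" using sg_uniq assms by blast
  have "sg i b = sg (col {a,b}) (sg i a)" using b sg_comm a c assms(2) by metis
  thus ?thesis using sg_ex[of "sg i a" "col {a,b}"] sg_V a assms(2) c by auto
qed

lemma oddd_pull: assumes "oddd Q" "i \<in> {1..N}" shows "oddd (\<lambda>e. Q (sg i ` e))"
  unfolding oddd_def
proof (intro allI impI)
  fix v0 v1 v2 v3 a b
  assume h: "a \<noteq> b \<and> {v0, v1} \<in> E \<and> col {v0, v1} = a \<and> {v1, v2} \<in> E \<and> col {v1, v2} = b \<and>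
          {v2, v3} \<in> E \<and> col {v2, v3} = a \<and> {v3, v0} \<in> E \<and> col {v3, v0} = b"
  have "odd (of_bool (Q {sg i v0, sg i v1}) + of_bool (Q {sg i v1, sg i v2}) + of_bool (Q {sg i v2, sg i v3})
             + of_bool (Q {sg i v3, sg i v0}) :: nat)"
    using assms(1) unfolding oddd_def
    using h sg_edge[OF _ assms(2)] by metis
  thus "odd (of_bool (Q (sg i ` {v0, v1})) + of_bool (Q (sg i ` {v1, v2})) + of_bool (Q (sg i ` {v2, v3}))
             + of_bool (Q (sg i ` {v3, v0})) :: nat)" by simp
qed


lemma coord: assumes "card V = 2 ^ N"
  shows "\<exists>c. \<forall>y\<in>V. \<forall>j\<in>{1..N}. c (sg j y) = (c y \<noteq> (i = j))"
proof -
  have "V \<noteq> {}" using assms finV by auto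
  then obtain b where b: "b \<in> V" by blast
  define f where "f = (\<lambda>T. act T b)"
  define psi where "psi = the_inv_into (Pow {1..N}) f"
  have inj: "inj_on f (Pow {1..N})" using cardV_inj[OF assms b] f_def by simp
  have img: "V \<subseteq> f ` Pow {1..N}" using act_surj[OF b] f_def by auto
  have p1: "psi y \<in> Pow {1..N}" "f (psi y) = y" if "y \<in> V" for y
  proof -
    have yin: "y \<in> f ` Pow {1..N}" using img that by auto
    show "psi y \<in> Pow {1..N}" using the_inv_into_into[OF inj yin subset_refl] psi_def by simp
    show "f (psi y) = y" using f_the_inv_into_f[OF inj yin] psi_def by simp
  qed
  have "psi (sg j y) = psi y - {j} \<union> ({j} - psi y)" if "y \<in> V" "j \<in> {1..N}" for y j
  proof -
    have "sg j y = sg j (f (psi y))" using p1 that by simp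
    also have "\<dots> = f (psi y - {j} \<union> ({j} - psi y))"
      unfolding f_def act_def using actk_flip[of N b j] b that by simp
    finally have "sg j y = f (psi y - {j} \<union> ({j} - psi y))" .
    moreover have "psi y - {j} \<union> ({j} - psi y) \<in> Pow {1..N}" using p1 that by auto
    ultimately show ?thesis using the_inv_into_f_f[OF inj] psi_def by simp
  qed
  hence "\<forall>y\<in>V. \<forall>j\<in>{1..N}. (i \<in> psi (sg j y)) = ((i \<in> psi y) \<noteq> (i = j))" by auto
  thus ?thesis by (intro exI[of _ "\<lambda>y. i \<in> psi y"])
qed

lemma single: assumes "card V = 2 ^ N" "i \<in> {1..N}" "oddd Q"
  shows "\<exists>S\<subseteq>V. \<forall>e\<in>E. Q (sg i ` e) = switch S Q e"
proof -
  obtain c where c0: "\<forall>y\<in>V. \<forall>j\<in>{1..N}. c (sg j y) = (c y \<noteq> (i = j))"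
    using coord[OF assms(1), of i] by (elim exE) assumption
  have c: "c (sg j y) = (c y \<noteq> (i = j))" if "y \<in> V" "j \<in> {1..N}" for y j
    using c0 that by simp
  define S where "S = {y\<in>V. Q {y, sg i y} \<noteq> (boson y \<noteq> c y)}"
  have "Q (sg i ` e) = switch S Q e" if e: "e \<in> E" for e
  proof -
    obtain y where y: "y \<in> V" "e = {y, sg (col e) y}" "col e \<in> {1..N}" using edge_sg e by blast
    define j where "j = col e"
    define z where "z = sg j y"
    have ez: "e = {y, z}" using y j_def z_def by simp
    have zV: "z \<in> V" using sg_V y j_def z_def by simp
    have yz: "y \<noteq> z" using edge_ne e ez by blast
    have bz: "boson z = (\<not> boson y)" using sg_boson y j_def z_def by simp
    show ?thesis
    proof (cases "j = i")
      case True
      have "sg i ` e = e" using ez z_def True sg_sg[OF y(1) assms(2)] by auto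
      moreover have "Q {z, sg i z} = Q {y, sg i y}"
        using z_def True sg_sg[OF y(1) assms(2)] by (simp add: insert_commute)
      moreover have "c z = (\<not> c y)" using c[OF y(1), of j] y j_def z_def True by simp
      ultimately show ?thesis unfolding ez using switch_pair[OF yz] S_def zV y(1) bz by auto
    next
      case False
      have cz: "c z = c y" using c[OF y(1), of j] y j_def z_def False by simp
      have w: "sg i z = sg j (sg i y)" using z_def sg_comm y assms(2) j_def by metis
      have e1: "{y, z} \<in> E" "col {y, z} = j" using e ez j_def by auto
      have e2: "{z, sg i z} \<in> E" "col {z, sg i z} = i" using sg_ex zV assms(2) by auto
      have e3: "{sg i z, sg i y} \<in> E" "col {sg i z, sg i y} = j"
        using sg_ex[of "sg i y" j] w sg_V y assms(2) j_def by (auto simp: insert_commute)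
      have e4: "{sg i y, y} \<in> E" "col {sg i y, y} = i" using sg_ex y assms(2) by (auto simp: insert_commute)
      have "odd (of_bool (Q {y, z}) + of_bool (Q {z, sg i z}) + of_bool (Q {sg i z, sg i y})
             + of_bool (Q {sg i y, y}) :: nat)"
        using assms(3) unfolding oddd_def using e1 e2 e3 e4 False by blast
      hence o: "Q {y, z} \<noteq> (Q {z, sg i z} \<noteq> (Q {sg i y, sg i z} \<noteq> Q {y, sg i y}))"
        unfolding odd4 by (simp add: insert_commute)
      have "sg i ` e = {sg i y, sg i z}" using ez by simp
      then show ?thesis unfolding ez using switch_pair[OF yz] S_def zV y(1) bz cz o by auto
    qed
  qed
  moreover have "S \<subseteq> V" using S_def by auto
  ultimately show ?thesis by blast
qed


lemma switch_comb: assumes "e \<in> E"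
  shows "(switch S1 Q e \<noteq> odd (card (e \<inter> S2))) = switch (S1 - S2 \<union> (S2 - S1)) Q e"
proof -
  obtain u v where "u \<noteq> v" "e = {u, v}" using edge[OF assms] by blast
  moreover have "odd (card ({u,v} \<inter> S2)) = ((u \<in> S2) \<noteq> (v \<in> S2))"
    using switch_pair[OF \<open>u \<noteq> v\<close>, of S2 "\<lambda>_. False"] unfolding switch_def by simp
  moreover have "switch S1 Q {u,v} = (Q {u, v} \<noteq> ((u \<in> S1) \<noteq> (v \<in> S1)))"
    by (rule switch_pair[OF \<open>u \<noteq> v\<close>])
  moreover have "switch (S1 - S2 \<union> (S2 - S1)) Q {u,v} =
     (Q {u, v} \<noteq> ((u \<in> S1 - S2 \<union> (S2 - S1)) \<noteq> (v \<in> S1 - S2 \<union> (S2 - S1))))"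
    by (rule switch_pair[OF \<open>u \<noteq> v\<close>])
  ultimately show ?thesis by auto
qed

lemma act_par: assumes "card V = 2 ^ N"
  shows "k \<le> N \<Longrightarrow> \<forall>Q. oddd Q \<longrightarrow> (\<exists>S\<subseteq>V. \<forall>e\<in>E. Q (actk U k ` e) = switch S Q e)"
proof (induction k)
  case 0
  have "switch {} Q e = Q e" for Q e unfolding switch_def by simp
  then show ?case by auto
next
  case (Suc k)
  show ?case
  proof (intro allI impI)
    fix Q assume Q: "oddd Q"
    show "\<exists>S\<subseteq>V. \<forall>e\<in>E. Q (actk U (Suc k) ` e) = switch S Q e"
    proof (cases "Suc k \<in> U")
      case True
      have sk: "Suc k \<in> {1..N}" using Suc by auto
      obtain S1 where S1: "S1 \<subseteq> V" "\<forall>e\<in>E. Q (sg (Suc k) ` e) = switch S1 Q e"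
        using single[OF assms sk Q] by blast
      have k: "k \<le> N" using Suc.prems by simp
      have ih: "\<exists>S\<subseteq>V. \<forall>e\<in>E. Q (sg (Suc k) ` (actk U k ` e)) = switch S (\<lambda>e. Q (sg (Suc k) ` e)) e"
        using spec[OF Suc.IH[OF k], of "\<lambda>e. Q (sg (Suc k) ` e)"] oddd_pull[OF Q sk] by simp
      then obtain S2 where S2: "S2 \<subseteq> V" "\<forall>e\<in>E. Q (sg (Suc k) ` (actk U k ` e)) = switch S2 (\<lambda>e. Q (sg (Suc k) ` e)) e"
        by blast
      have "\<forall>e\<in>E. Q (actk U (Suc k) ` e) = switch (S1 - S2 \<union> (S2 - S1)) Q e"
      proof
        fix e assume e: "e \<in> E"
        have "actk U (Suc k) ` e = sg (Suc k) ` (actk U k ` e)" using True by (auto simp: image_image)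
        hence "Q (actk U (Suc k) ` e) = (switch S1 Q e \<noteq> odd (card (e \<inter> S2)))"
          using S1 S2 e unfolding switch_def by simp
        thus "Q (actk U (Suc k) ` e) = switch (S1 - S2 \<union> (S2 - S1)) Q e" using switch_comb[OF e] by simp
      qed
      moreover have "S1 - S2 \<union> (S2 - S1) \<subseteq> V" using S1(1) S2(1) by auto
      ultimately show ?thesis by (intro exI[of _ "S1 - S2 \<union> (S2 - S1)"] conjI)
    next
      case False
      have "actk U (Suc k) ` e = actk U k ` e" for e using False by simp
      moreover have k: "k \<le> N" using Suc.prems by simp
      ultimately show ?thesis using spec[OF Suc.IH[OF k], of Q] Q by simp
    qed
  qed
qed

definition F :: "nat set \<Rightarrow> 'v \<Rightarrow> 'v" where "F U y = (if y \<in> V then act U y else y)"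

lemma act_edge: assumes "{u, v} \<in> E"
  shows "{act U u, act U v} \<in> E \<and> col {act U u, act U v} = col {u, v}"
proof -
  have u: "u \<in> V" and c: "col {u,v} \<in> {1..N}" using assms edge_ne colr by blast+
  have "v = sg (col {u,v}) u" using sg_uniq assms by blast
  hence "act U v = sg (col {u,v}) (act U u)" unfolding act_def using actk_sg u c by simp
  thus ?thesis using sg_ex[of "act U u" "col {u,v}"] actk_V u c unfolding act_def by auto
qed

lemma F_aut: assumes "card V = 2 ^ N" "U \<subseteq> {1..N}" "even (card U)"
  shows "F U \<in> Aut V E boson col par"
proof -
  have inv: "F U (F U y) = y" for y
    unfolding F_def act_def using actk_inv[of N y U] actk_V[of N y U] by auto
  have FV: "y \<in> V \<Longrightarrow> F U y \<in> V" for y unfolding F_def act_def using actk_V by auto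
  have bij: "bij_betw (F U) V V"
    by (rule bij_betw_byWitness[where f'="F U"]) (use inv FV in auto)
  have ed: "{F U u, F U v} \<in> E" if "u \<in> V" "v \<in> V" "{u, v} \<in> E" for u v
    using act_edge that unfolding F_def by auto
  have edges: "\<forall>u\<in>V. \<forall>v\<in>V. {u, v} \<in> E \<longleftrightarrow> {F U u, F U v} \<in> E"
    using ed FV inv by metis
  have cols: "\<forall>e\<in>E. col (F U ` e) = col e"
  proof
    fix e assume e: "e \<in> E"
    obtain u v where uv: "u \<in> V" "v \<in> V" "e = {u,v}" using edge[OF e] by blast
    thus "col (F U ` e) = col e" using act_edge[of u v U] e unfolding F_def by auto
  qed
  have bos: "\<forall>v\<in>V. boson (F U v) = boson v"
  proof
    fix v assume "v \<in> V"
    moreover have "U \<inter> {1..N} = U" using assms(2) by auto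
    ultimately show "boson (F U v) = boson v" unfolding F_def act_def using actk_boson[of N v U] assms(3) by simp
  qed
  have "oddd par" unfolding oddd_def
    using D[THEN conjunct2, THEN conjunct2, THEN conjunct2, THEN conjunct2, THEN conjunct2, THEN conjunct2, THEN conjunct2, THEN conjunct2] .
  hence "\<exists>S\<subseteq>V. \<forall>e\<in>E. par (actk U N ` e) = switch S par e"
    using act_par[OF assms(1), of N U] by simp
  then obtain S where S: "S \<subseteq> V" "\<forall>e\<in>E. par (actk U N ` e) = switch S par e"
    by blast
  have "\<forall>e\<in>E. par (F U ` e) = switch S par e"
  proof
    fix e assume e: "e \<in> E"
    obtain u v where uv: "u \<in> V" "v \<in> V" "e = {u,v}" using edge[OF e] by blast
    hence "F U ` e = actk U N ` e" unfolding F_def act_def by auto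
    thus "par (F U ` e) = switch S par e" using S e by simp
  qed
  hence "adinkra_automorphism V E boson col par (F U)"
    unfolding adinkra_automorphism_def using bij edges cols bos S(1) by blast
  moreover have "\<forall>x. x \<notin> V \<longrightarrow> F U x = x" unfolding F_def by simp
  ultimately show ?thesis unfolding Aut_def by blast
qed

lemma rig: assumes "adinkra_automorphism V E boson col par f" "y \<in> V" "i \<in> {1..N}"
  shows "f (sg i y) = sg i (f y)"
proof -
  have e: "{y, sg i y} \<in> E" "col {y, sg i y} = i" using sg_ex assms by auto
  have V: "sg i y \<in> V" using sg_V assms by auto
  have "{f y, f (sg i y)} \<in> E" using assms(1) e V assms(2) unfolding adinkra_automorphism_def by blast
  moreover have "col {f y, f (sg i y)} = i" using assms(1) e unfolding adinkra_automorphism_def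
    by (metis image_empty image_insert)
  ultimately show ?thesis using sg_uniq by blast
qed

lemma rig_act: assumes "adinkra_automorphism V E boson col par f" "y \<in> V"
  shows "k \<le> N \<Longrightarrow> f (actk U k y) = actk U k (f y)"
proof (induction k)
  case (Suc k)
  have k: "k \<le> N" using Suc.prems by simp
  have v: "actk U k y \<in> V" using actk_V k assms(2) by simp
  have "f (sg (Suc k) (actk U k y)) = sg (Suc k) (f (actk U k y))" using rig[OF assms(1) v] Suc.prems by simp
  then show ?case using Suc.IH[OF k] by simp
qed simp


end

theorem mainTheorem4:
  fixes N :: nat and V :: "'v set" and E :: "'v set set" and boson :: "'v \<Rightarrow> bool"
    and col :: "'v set \<Rightarrow> nat" and par :: "'v set \<Rightarrow> bool"
  assumes "adinkra N V E boson col par"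
    and "N \<ge> 1"
    and "card V = 2 ^ N"
  shows "(\<forall>f\<in>Aut V E boson col par. \<forall>v\<in>V. f v = v \<longrightarrow> f = id)
    \<and> 2 * card (Aut V E boson col par) = card V
    \<and> card (Aut V E boson col par) = 2 ^ (N - 1)"
proof -
  interpret adk N V E boson col par using assms(1) by unfold_locales
  have autV: "f y \<in> V" if "f \<in> Aut V E boson col par" "y \<in> V" for f y
    using that unfolding Aut_def adinkra_automorphism_def bij_betw_def by blast
  have agree: "f = g" if fg: "f \<in> Aut V E boson col par" "g \<in> Aut V E boson col par" "b \<in> V" "f b = g b" for f g b
  proof
    fix z
    show "f z = g z"
    proof (cases "z \<in> V")
      case True
      then obtain T where T: "z = act T b" using act_surj fg(3) by blast
      have af: "adinkra_automorphism V E boson col par f" using fg(1) unfolding Aut_def by blast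
      have ag: "adinkra_automorphism V E boson col par g" using fg(2) unfolding Aut_def by blast
      have "f z = act T (f b)" "g z = act T (g b)"
        using rig_act[OF af fg(3), where k=N and U=T] rig_act[OF ag fg(3), where k=N and U=T] T
        unfolding act_def by auto
      then show ?thesis using fg(4) by simp
    next
      case False
      then show ?thesis using fg unfolding Aut_def by auto
    qed
  qed
  have idA: "id \<in> Aut V E boson col par"
  proof -
    have "switch {} par e = par e" for e unfolding switch_def by simp
    thus ?thesis unfolding Aut_def adinkra_automorphism_def by auto
  qed
  have part1: "\<forall>f\<in>Aut V E boson col par. \<forall>v\<in>V. f v = v \<longrightarrow> f = id"
    using agree idA by (metis id_apply)
  have "V \<noteq> {}" using assms(3) finV by auto
  then obtain b where b: "b \<in> V" by blast
  define B where "B = {x\<in>V. boson x = boson b}"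
  have bij: "bij_betw (\<lambda>f. f b) (Aut V E boson col par) B"
  proof (rule bij_betwI')
    fix f g assume fa: "f \<in> Aut V E boson col par" and ga: "g \<in> Aut V E boson col par"
    show "(f b = g b) = (f = g)"
    proof
      assume "f b = g b"
      thus "f = g" by (rule agree[OF fa ga b])
    next
      assume "f = g"
      thus "f b = g b" by (rule arg_cong)
    qed
  next
    fix f assume fa: "f \<in> Aut V E boson col par"
    have af: "adinkra_automorphism V E boson col par f" using fa unfolding Aut_def by blast
    have "\<forall>v\<in>V. boson (f v) = boson v"
      using af[unfolded adinkra_automorphism_def, THEN conjunct2, THEN conjunct2, THEN conjunct2, THEN conjunct1] .
    hence "boson (f b) = boson b" using b by blast
    moreover have "f b \<in> V" by (rule autV[OF fa b])
    ultimately show "f b \<in> B" unfolding B_def by simp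
  next
    fix x assume x: "x \<in> B"
    then obtain T where T: "T \<subseteq> {1..N}" "x = act T b" using act_surj b B_def by blast
    have "T \<inter> {1..N} = T" using T by auto
    hence "even (card T)" using actk_boson[of N b T] b x T unfolding B_def act_def by auto
    hence "F T \<in> Aut V E boson col par" using F_aut[OF assms(3) T(1)] by blast
    moreover have "F T b = x" using T b unfolding F_def by simp
    ultimately show "\<exists>f\<in>Aut V E boson col par. x = f b" by metis
  qed
  have one: "1 \<in> {1..N}" using assms(2) by auto
  define Bo where "Bo = {x\<in>V. boson x}"
  define Fe where "Fe = {x\<in>V. \<not> boson x}"
  have "bij_betw (sg 1) Bo Fe"
    by (rule bij_betw_byWitness[where f'="sg 1"])
       (use sg_sg sg_V sg_boson one in \<open>auto simp: Bo_def Fe_def\<close>)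
  hence cb: "card Bo = card Fe" by (rule bij_betw_same_card)
  have "V = Bo \<union> Fe" "Bo \<inter> Fe = {}" unfolding Bo_def Fe_def by auto
  hence "card V = card Bo + card Fe" using finV card_Un_disjoint
    by (metis finite_Un)
  hence "2 * card B = card V" using cb unfolding B_def Bo_def Fe_def by (cases "boson b") auto
  moreover have "card (Aut V E boson col par) = card B" using bij by (rule bij_betw_same_card)
  moreover have "(2::nat) ^ N = 2 * 2 ^ (N - 1)" using assms(2)
    by (metis Suc_diff_1 less_le_trans power_Suc zero_less_one)
  ultimately show ?thesis using part1 assms(3) by auto
qed

end
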